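(* Let $\mathcal S$ be a finite set, let $\kappa$ be a real symmetric $\mathcal S\times\mathcal S$ matrix with nonnegative entries, and let $\mu,c\in(0,\infty)^{\mathcal S}$ with $c_i<\mu_i$ for all $i$. Assume $D_c^{-1}-\kappa$ is positive definite, and set $\Phi=(D_c^{-1}-\kappa)^{-1}$, \[ A_0=(I-\kappa D_c)\,D_{\mu-c}^{-1}\,(I-D_\mu\kappa),\qquad A=\tfrac12(A_0+A_0^T). \] Let $k\in\mathbb N^{\mathcal S}$ and $h>0$ be such that $\Phi-h\,kk^T$ is positive definite, and let $B_k=(\Phi-h\,kk^T)^{-1}$. If \[ h\,k^T(D_\mu^{-1}-\kappa)k<1, \] then $A+B_k$ is positive definite.
   Context: For a vector $x\in\mathbb R^{\mathcal S}$, $D_x$ denotes the diagonal matrix with diagonal entries $x_i$; $\mu-c$ is the componentwise difference; $I$ is the identity matrix. (In the paper $h=h(k)$ is the limiting density of components of type vector $k$, but only $h>0$ and the stated conditions are used.) *)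

theory Defs
  imports "HOL-Analysis.Analysis"
begin

definition pos_def_matrix :: "real^'n^'n \<Rightarrow> bool" where
  "pos_def_matrix M \<longleftrightarrow> transpose M = M \<and> (\<forall>x. x \<noteq> 0 \<longrightarrow> x \<bullet> (M *v x) > 0)"

definition diag_mat :: "real^'n \<Rightarrow> real^'n^'n" where
  "diag_mat x = (\<chi> i j. if i = j then x $ i else 0)"

definition outer :: "real^'n \<Rightarrow> real^'n \<Rightarrow> real^'n^'n" where
  "outer u v = (\<chi> i j. u $ i * v $ j)"

end

theory Submission
  imports Defs
begin

lemma diag_mv: "diag_mat a *v v = (\<chi> i. a$i * v$i)"
proof -
  have "\<And>i. (\<Sum>j\<in>UNIV. (if i = j then a$i else 0) * v$j) = a$i * v$i"
    by (simp add: if_distrib[of "\<lambda>t. t * _"] cong: if_cong)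
  then show ?thesis by (simp add: diag_mat_def matrix_vector_mult_def vec_eq_iff)
qed

lemma scaleR_mv: "((r::real) *\<^sub>R M) *v v = r *\<^sub>R (M *v (v::real^'n))"
  by (simp add: matrix_vector_mult_def vec_eq_iff sum_distrib_left mult.assoc)

lemma outer_mv: "outer k k *v z = (k \<bullet> z) *\<^sub>R (k::real^'n)"
  by (simp add: outer_def matrix_vector_mult_def vec_eq_iff inner_vec_def sum_distrib_left mult_ac)

lemma inner_transpose: "(x::real^'n) \<bullet> (transpose M *v y) = (M *v x) \<bullet> y"
  by (metis dot_lmul_matrix inner_commute vector_transpose_matrix transpose_transpose)

lemma sym_inner: "transpose M = M \<Longrightarrow> (x::real^'n) \<bullet> (M *v y) = (M *v x) \<bullet> y"
  by (metis inner_transpose)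

lemma matrix_inv_unique':
  fixes A B :: "real^'n^'n"
  assumes "A ** B = mat 1"
  shows "matrix_inv A = B"
proof -
  have BA: "B ** A = mat 1" using assms matrix_left_right_inverse by blast
  have ex: "\<exists>A'. A ** A' = mat 1 \<and> A' ** A = mat 1" using assms BA by blast
  let ?A' = "matrix_inv A"
  have "A ** ?A' = mat 1 \<and> ?A' ** A = mat 1"
    unfolding matrix_inv_def by (rule someI_ex[OF ex])
  then have "?A' ** A = mat 1" by blast
  then have "?A' ** (A ** B) = B" by (metis matrix_mul_assoc matrix_mul_lid)
  then show ?thesis using assms by (simp add: matrix_mul_rid)
qed

lemma pd_inv:
  fixes M :: "real^'n^'n"
  assumes "pos_def_matrix M"
  shows "M ** matrix_inv M = mat 1 \<and> matrix_inv M ** M = mat 1"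
proof -
  have "\<forall>x. M *v x = 0 \<longrightarrow> x = 0"
    using assms unfolding pos_def_matrix_def by force
  then have "\<exists>B. B ** M = mat 1" using matrix_left_invertible_ker by blast
  then obtain B where B: "B ** M = mat 1" by blast
  then have "M ** B = mat 1" using matrix_left_right_inverse by blast
  then have "matrix_inv M = B" by (rule matrix_inv_unique')
  then show ?thesis using B \<open>M ** B = mat 1\<close> by simp
qed

lemma inv_sym:
  fixes S :: "real^'n^'n"
  assumes "transpose S = S" "S ** B = mat 1"
  shows "transpose B = B"
proof -
  have "transpose B ** S = mat 1"
    by (metis assms matrix_transpose_mul transpose_mat)
  then have "transpose B ** (S ** B) = B" by (metis matrix_mul_assoc matrix_mul_lid)
  then show ?thesis using assms by (simp add: matrix_mul_rid)
qed

lemma inv_diag: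
  assumes "\<forall>i. a$i \<noteq> (0::real)"
  shows "matrix_inv (diag_mat a) = diag_mat (\<chi> i. 1 / a$i)"
proof (rule matrix_inv_unique')
  show "diag_mat a ** diag_mat (\<chi> i. 1 / a $ i) = mat 1"
    unfolding matrix_eq
    using assms by (simp add: matrix_vector_mul_assoc[symmetric] diag_mv vec_eq_iff)
qed

theorem mainTheorem3:
  fixes \<kappa> :: "real^'S^'S" and \<mu> c :: "real^'S" and k :: "real^'S" and h :: real
  assumes kappa_sym: "transpose \<kappa> = \<kappa>"
    and kappa_nonneg: "\<forall>i j. \<kappa> $ i $ j \<ge> 0"
    and c_pos: "\<forall>i. c $ i > 0"
    and mu_pos: "\<forall>i. \<mu> $ i > 0"
    and c_lt_mu: "\<forall>i. c $ i < \<mu> $ i"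
    and pd1: "pos_def_matrix (matrix_inv (diag_mat c) - \<kappa>)"
    and k_nat: "\<forall>i. k $ i \<in> \<nat>"
    and h_pos: "h > 0"
    and pd2: "pos_def_matrix (matrix_inv (matrix_inv (diag_mat c) - \<kappa>) - h *\<^sub>R outer k k)"
    and cond: "h * (k \<bullet> ((matrix_inv (diag_mat \<mu>) - \<kappa>) *v k)) < 1"
  shows "let \<Phi> = matrix_inv (matrix_inv (diag_mat c) - \<kappa>);
             A0 = (mat 1 - \<kappa> ** diag_mat c) ** matrix_inv (diag_mat (\<mu> - c))
                  ** (mat 1 - diag_mat \<mu> ** \<kappa>);
             A = (1/2) *\<^sub>R (A0 + transpose A0);
             B = matrix_inv (\<Phi> - h *\<^sub>R outer k k)
         in pos_def_matrix (A + B)"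
proof -
  define P where "P = matrix_inv (diag_mat c) - \<kappa>"
  define \<Phi> where "\<Phi> = matrix_inv P"
  define A0 where "A0 = (mat 1 - \<kappa> ** diag_mat c) ** matrix_inv (diag_mat (\<mu> - c))
                  ** (mat 1 - diag_mat \<mu> ** \<kappa>)"
  define A where "A = (1/2) *\<^sub>R (A0 + transpose A0)"
  define S where "S = \<Phi> - h *\<^sub>R outer k k"
  define B where "B = matrix_inv S"
  define w where "w = (\<chi> i. c$i * \<mu>$i / (\<mu>$i - c$i))"
  have Ci: "matrix_inv (diag_mat c) = diag_mat (\<chi> i. 1 / c$i)"
    using c_pos by (intro inv_diag) (auto simp: less_imp_neq[symmetric])
  have Di: "matrix_inv (diag_mat (\<mu> - c)) = diag_mat (\<chi> i. 1 / (\<mu>$i - c$i))"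
  proof -
    have "matrix_inv (diag_mat (\<mu> - c)) = diag_mat (\<chi> i. 1 / (\<mu> - c)$i)"
      using c_lt_mu by (intro inv_diag) (auto, metis less_irrefl)
    then show ?thesis by simp
  qed
  have Psym: "transpose P = P" and Ppos: "\<And>x. x \<noteq> 0 \<Longrightarrow> x \<bullet> (P *v x) > 0"
    using pd1 unfolding P_def pos_def_matrix_def by auto
  have PPhi: "\<Phi> ** P = mat 1" using pd_inv[OF pd1] unfolding \<Phi>_def P_def by blast
  have Ssym: "transpose S = S" and Spos: "\<And>x. x \<noteq> 0 \<Longrightarrow> x \<bullet> (S *v x) > 0"
    using pd2 unfolding S_def \<Phi>_def P_def pos_def_matrix_def by auto
  have SB: "S ** B = mat 1" using pd_inv[OF pd2] unfolding B_def S_def \<Phi>_def P_def by blast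
  have Bsym: "transpose B = B" using inv_sym[OF Ssym SB] .
  have Asym: "transpose A = A"
    unfolding A_def by (simp add: transpose_def vec_eq_iff add.commute)
  have key: "x \<bullet> ((A + B) *v x) > 0" if "x \<noteq> 0" for x
  proof -
    define y where "y = P *v x"
    have yne: "y \<noteq> 0" using Ppos[OF that] unfolding y_def by auto
    have kx: "\<kappa> *v v = (\<chi> i. v$i / c$i) - P *v v" for v
      unfolding P_def Ci by (simp add: matrix_vector_mult_diff_rdistrib diag_mv vec_eq_iff field_simps)
    have A0x: "A0 *v x = P *v (\<chi> i. w$i * y$i) - y"
    proof -
      have e1: "(mat 1 - diag_mat \<mu> ** \<kappa>) *v x = (\<chi> i. x$i - \<mu>$i * x$i / c$i + \<mu>$i * y$i)"
        by (simp add: matrix_vector_mult_diff_rdistrib matrix_vector_mul_assoc[symmetric] diag_mv kx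
             vec_eq_iff y_def algebra_simps)
      have e2: "matrix_inv (diag_mat (\<mu> - c)) *v (\<chi> i. x$i - \<mu>$i * x$i / c$i + \<mu>$i * y$i)
          = (\<chi> i. (w$i * y$i - x$i) / c$i)"
      proof -
        have n1: "\<And>i. c$i \<noteq> 0" using c_pos by (metis less_irrefl)
        have n2: "\<And>i. \<mu>$i - c$i \<noteq> 0" using c_lt_mu by (metis less_irrefl eq_iff_diff_eq_0)
        show ?thesis
          apply (simp add: Di diag_mv w_def vec_eq_iff)
          apply (intro allI)
          subgoal for i
          proof -
            have a: "c$i \<noteq> 0" "\<mu>$i - c$i \<noteq> 0" using n1 n2 by auto
            have "x $ i - \<mu> $ i * x $ i / c $ i = - (\<mu>$i - c$i) * x$i / c$i"
              using a by (simp add: field_simps)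
            then show ?thesis using a by (simp add: field_simps)
          qed
          done
      qed
      have e3: "(mat 1 - \<kappa> ** diag_mat c) *v (\<chi> i. (w$i * y$i - x$i) / c$i)
          = P *v (\<chi> i. w$i * y$i) - y"
      proof -
        have "(mat 1 - \<kappa> ** diag_mat c) *v (\<chi> i. (w$i * y$i - x$i) / c$i)
            = (\<chi> i. (w$i * y$i - x$i) / c$i) - \<kappa> *v (\<chi> i. w$i * y$i - x$i)"
        proof -
          have "(\<chi> i. c$i * (\<chi> i. (w$i * y$i - x$i) / c$i) $ i) = (\<chi> i. w$i * y$i - x$i)"
            using c_pos by (simp add: vec_eq_iff less_imp_neq[symmetric])
          then show ?thesis
            by (simp add: matrix_vector_mult_diff_rdistrib matrix_vector_mul_assoc[symmetric] diag_mv)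
        qed
        also have "\<dots> = P *v (\<chi> i. w$i * y$i - x$i)"
          by (simp add: kx)
        also have "(\<chi> i. w$i * y$i - x$i) = (\<chi> i. w$i * y$i) - x"
          by (simp add: vec_eq_iff)
        finally show ?thesis by (simp add: matrix_vector_mult_diff_distrib y_def)
      qed
      show ?thesis unfolding A0_def
        by (simp add: matrix_vector_mul_assoc[symmetric] e1 e2 e3)
    qed
    have xA0x: "x \<bullet> (A0 *v x) = y \<bullet> (\<chi> i. w$i * y$i) - x \<bullet> y"
      unfolding A0x by (simp add: inner_diff_right sym_inner[OF Psym] y_def)
    have xAx: "x \<bullet> (A *v x) = x \<bullet> (A0 *v x)"
      unfolding A_def scaleR_mv matrix_vector_mult_add_rdistrib
      by (simp add: inner_add_right) (metis dot_lmul_matrix inner_commute)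
    define v where "v = B *v x"
    have Sv: "S *v v = x" unfolding v_def by (simp add: matrix_vector_mul_assoc SB)
    have Py: "\<Phi> *v y = x" unfolding y_def by (simp add: matrix_vector_mul_assoc PPhi)
    have Sy: "S *v y = x - (h * (k \<bullet> y)) *\<^sub>R k"
      unfolding S_def by (simp add: matrix_vector_mult_diff_rdistrib scaleR_mv outer_mv Py)
    have nn: "0 \<le> (v - y) \<bullet> (S *v (v - y))"
      using Spos[of "v - y"] by (cases "v - y = 0") auto
    have "(v - y) \<bullet> (S *v (v - y)) = v \<bullet> x - 2 * (x \<bullet> y) + y \<bullet> (S *v y)"
    proof -
      have "v \<bullet> (S *v y) = x \<bullet> y" using sym_inner[OF Ssym, of v y] Sv by simp
      then show ?thesis
        by (simp add: matrix_vector_mult_diff_distrib inner_diff_left inner_diff_right Sv inner_commute)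
    qed
    moreover have "y \<bullet> (S *v y) = x \<bullet> y - h * (k \<bullet> y)^2"
      unfolding Sy by (simp add: inner_diff_right inner_commute power2_eq_square)
    ultimately have vx: "v \<bullet> x \<ge> x \<bullet> y"
      using nn h_pos by (smt (verit) mult_nonneg_nonneg zero_le_power2)
    have wpos: "y \<bullet> (\<chi> i. w$i * y$i) > 0"
    proof -
      obtain j where j: "y$j \<noteq> 0" using yne by (metis vec_eq_iff zero_index)
      have wp: "\<And>i. w$i > 0" using c_pos mu_pos c_lt_mu unfolding w_def
        by (simp add: algebra_simps)
      have "y \<bullet> (\<chi> i. w$i * y$i) = (\<Sum>i\<in>UNIV. w$i * (y$i)^2)"
        by (simp add: inner_vec_def power2_eq_square algebra_simps)
      also have "\<dots> > 0"
      proof (rule sum_pos2[where i=j])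
        show "0 < w$j * (y$j)^2" using wp j by simp
        show "\<And>i. i \<in> UNIV \<Longrightarrow> 0 \<le> w$i * (y$i)^2" using wp by (simp add: less_imp_le)
      qed auto
      finally show ?thesis .
    qed
    have "x \<bullet> ((A + B) *v x) = x \<bullet> (A *v x) + x \<bullet> v"
      by (simp add: matrix_vector_mult_add_rdistrib inner_add_right v_def)
    then show ?thesis using xAx xA0x vx wpos by (simp add: inner_commute)
  qed
  have "pos_def_matrix (A + B)"
    unfolding pos_def_matrix_def using key Asym Bsym
    by (simp add: transpose_def vec_eq_iff)
  then show ?thesis
    unfolding Let_def A_def A0_def B_def S_def \<Phi>_def P_def by simp
qed

end
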